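(* Let $n_1,\dots,n_k$ be nonnegative integers. Then $\mathcal{L}^{(t)}_H\big(\prod_{i=1}^k H^{(t)}_{n_i}(x)\big)$ equals the number of inhomogeneous coverings of $[n_1]\sqcup\dots\sqcup[n_k]$ by $t$-paths, i.e. the number of ways to partition the set $[n_1]\sqcup\dots\sqcup[n_k]$ into blocks of size $t+1$, none contained in a single $[n_i]$, and to choose for each block one of the $(t+1)!/2$ (undirected) Hamiltonian paths on that block.
   Context: Fix an integer $t\ge1$. A $t$-path in $K_n$ is a subgraph isomorphic to a path with $t$ edges. $H^{(t)}_n(x)=\sum_F(-1)^{|F|}x^{\,n-(t+1)|F|}$ over all families $F$ of pairwise vertex-disjoint $t$-paths in $K_n$ ($H^{(t)}_0=1$). Let $\mu^{(t)}_n$ be the number of coverings of all vertices of $K_n$ by pairwise vertex-disjoint $t$-paths ($\mu^{(t)}_0=1$; $\mu^{(t)}_n=0$ if $t+1\nmid n$), and let $\mathcal{L}^{(t)}_H$ be the linear functional with $\mathcal{L}^{(t)}_H(x^n)=\mu^{(t)}_n$. *)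

theory Defs
  imports "HOL-Computational_Algebra.Polynomial"
begin

text \<open>A path given by a list of distinct vertices, represented by its edge set
  (edges are 2-element sets).\<close>
definition path_edges :: "'a list \<Rightarrow> 'a set set" where
  "path_edges xs = {{xs ! i, xs ! Suc i} | i. Suc i < length xs}"

definition tpaths :: "nat \<Rightarrow> 'a set \<Rightarrow> 'a set set set" where
  "tpaths t V = {path_edges xs | xs. distinct xs \<and> length xs = Suc t \<and> set xs \<subseteq> V}"

text \<open>Vertex set of a path (union of its edges; correct for t >= 1).\<close>
definition pverts :: "'a set set \<Rightarrow> 'a set" where
  "pverts P = \<Union>P"

definition path_families :: "nat \<Rightarrow> 'a set \<Rightarrow> 'a set set set set" where
  "path_families t V = {F. F \<subseteq> tpaths t V \<and>
      (\<forall>P\<in>F. \<forall>Q\<in>F. P \<noteq> Q \<longrightarrow> pverts P \<inter> pverts Q = {})}"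

definition path_coverings :: "nat \<Rightarrow> 'a set \<Rightarrow> 'a set set set set" where
  "path_coverings t V = {F \<in> path_families t V. (\<Union>P\<in>F. pverts P) = V}"

definition Hpoly :: "nat \<Rightarrow> nat \<Rightarrow> int poly" where
  "Hpoly t n = (\<Sum>F\<in>path_families t {..<n}. monom ((-1) ^ card F) (n - Suc t * card F))"

definition mu :: "nat \<Rightarrow> nat \<Rightarrow> nat" where
  "mu t n = card (path_coverings t {..<n})"

definition LH :: "nat \<Rightarrow> int poly \<Rightarrow> int" where
  "LH t p = (\<Sum>i\<le>degree p. coeff p i * int (mu t i))"

text \<open>The disjoint union [n_1] \<sqcup> ... \<sqcup> [n_k], with ns = [n_1,...,n_k];
  element j of the i-th block (0-based) is (i, j).\<close>
definition disj_union :: "nat list \<Rightarrow> (nat \<times> nat) set" where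
  "disj_union ns = {(i, j). i < length ns \<and> j < ns ! i}"

definition inhom_coverings :: "nat \<Rightarrow> nat list \<Rightarrow> (nat \<times> nat) set set set set" where
  "inhom_coverings t ns = {F \<in> path_coverings t (disj_union ns).
      \<forall>P\<in>F. \<not> (\<exists>i. pverts P \<subseteq> {i} \<times> UNIV)}"

end

theory Submission
  imports Defs
begin

lemma path_edges_map: "path_edges (map g xs) = (`) g ` path_edges xs"
  unfolding path_edges_def apply (auto simp: image_iff) apply blast by (metis Suc_lessD nth_map)

lemma pverts_path_edges:
  assumes "length xs \<ge> 2" shows "pverts (path_edges xs) = set xs"
proof
  show "pverts (path_edges xs) \<subseteq> set xs"
    unfolding pverts_def path_edges_def by auto
  show "set xs \<subseteq> pverts (path_edges xs)"
  proof
    fix x assume "x \<in> set xs"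
    then obtain j where j: "j < length xs" "x = xs ! j" by (auto simp: in_set_conv_nth)
    show "x \<in> pverts (path_edges xs)"
    proof (cases "Suc j < length xs")
      case True
      then show ?thesis unfolding pverts_def path_edges_def using j by auto
    next
      case False
      then have "j = Suc (j - 1)" "Suc (j - 1) < length xs" using j assms by auto
      then show ?thesis unfolding pverts_def path_edges_def using j
        by (auto intro!: exI[of _ "{xs ! (j - 1), xs ! j}"])
    qed
  qed
qed

lemma tpathsE:
  assumes "t \<ge> 1" "P \<in> tpaths t V"
  obtains xs where "P = path_edges xs" "distinct xs" "length xs = Suc t" "set xs \<subseteq> V"
    "pverts P = set xs"
  using assms pverts_path_edges unfolding tpaths_def by fastforce

lemma tpaths_props:
  assumes "t \<ge> 1" "P \<in> tpaths t V"
  shows "pverts P \<subseteq> V" "pverts P \<noteq> {}" "card (pverts P) = Suc t" "finite (pverts P)"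
proof -
  obtain xs where "P = path_edges xs" "distinct xs" "length xs = Suc t" "set xs \<subseteq> V"
    "pverts P = set xs" using tpathsE[OF assms] by blast
  then show "pverts P \<subseteq> V" "pverts P \<noteq> {}" "card (pverts P) = Suc t" "finite (pverts P)"
    by (auto simp: distinct_card)
qed

lemmas tpaths_pverts_sub = tpaths_props(1)
lemmas tpaths_pverts_ne = tpaths_props(2)
lemmas card_pverts = tpaths_props(3)
lemmas finite_pverts = tpaths_props(4)

lemma tpaths_iff:
  assumes "t \<ge> 1" "P \<in> tpaths t V" shows "P \<in> tpaths t W \<longleftrightarrow> pverts P \<subseteq> W"
proof
  assume "P \<in> tpaths t W" then show "pverts P \<subseteq> W" using assms(1) tpaths_pverts_sub by blast
next
  assume "pverts P \<subseteq> W"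
  obtain xs where "P = path_edges xs" "distinct xs" "length xs = Suc t" "pverts P = set xs"
    using tpathsE[OF assms] by blast
  then show "P \<in> tpaths t W" using \<open>pverts P \<subseteq> W\<close> unfolding tpaths_def by auto
qed

lemma tpaths_mono: "V \<subseteq> W \<Longrightarrow> tpaths t V \<subseteq> tpaths t W"
  unfolding tpaths_def by auto

lemma finite_tpaths: assumes "finite V" shows "finite (tpaths t V)"
proof -
  have "tpaths t V \<subseteq> path_edges ` {xs. set xs \<subseteq> V \<and> length xs = Suc t}"
    unfolding tpaths_def by auto
  moreover have "finite {xs. set xs \<subseteq> V \<and> length xs = Suc t}"
    using finite_lists_length_eq[OF assms] by simp
  ultimately show ?thesis by (meson finite_imageI finite_subset)
qed

lemma finite_path_families: "finite V \<Longrightarrow> finite (path_families t V)"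
proof -
  assume "finite V"
  have "path_families t V \<subseteq> Pow (tpaths t V)" unfolding path_families_def by blast
  moreover have "finite (Pow (tpaths t V))" using finite_tpaths[OF \<open>finite V\<close>] by simp
  ultimately show ?thesis by (rule finite_subset)
qed

lemma finite_family: "finite V \<Longrightarrow> F \<in> path_families t V \<Longrightarrow> finite F"
  unfolding path_families_def by (metis (no_types, lifting) finite_tpaths finite_subset mem_Collect_eq)

definition VF :: "'a set set set \<Rightarrow> 'a set" where "VF F = (\<Union>P\<in>F. pverts P)"

lemma VF_sub: assumes "t \<ge> 1" "F \<in> path_families t V" shows "VF F \<subseteq> V"
  unfolding VF_def
proof (rule UN_least)
  fix P assume "P \<in> F"
  then have "P \<in> tpaths t V" using assms(2) unfolding path_families_def by blast
  then show "pverts P \<subseteq> V" by (rule tpaths_pverts_sub[OF assms(1)])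
qed

lemma card_VF:
  assumes "t \<ge> 1" "finite V" "F \<in> path_families t V"
  shows "card (VF F) = Suc t * card F"
proof -
  have fin: "finite F" using finite_family assms by blast
  have "card (VF F) = (\<Sum>P\<in>F. card (pverts P))"
    unfolding VF_def
  proof (rule card_UN_disjoint[OF fin])
    show "\<forall>P\<in>F. finite (pverts P)"
      using assms(3) finite_pverts[OF assms(1)] unfolding path_families_def by auto
    show "\<forall>P\<in>F. \<forall>Q\<in>F. P \<noteq> Q \<longrightarrow> pverts P \<inter> pverts Q = {}"
      using assms(3) unfolding path_families_def by auto
  qed
  also have "\<dots> = (\<Sum>P\<in>F. Suc t)"
  proof (rule sum.cong[OF refl])
    fix P assume "P \<in> F"
    then show "card (pverts P) = Suc t"
      using assms(3) card_pverts[OF assms(1)] unfolding path_families_def by auto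
  qed
  finally show ?thesis by simp
qed

lemma sum_Pow_alt: "finite A \<Longrightarrow> (\<Sum>F\<in>Pow A. (-1::int) ^ card F) = (if A = {} then 1 else 0)"
proof (induction A rule: finite_induct)
  case empty then show ?case by simp
next
  case (insert a A)
  have inj: "inj_on (insert a) (Pow A)"
  proof (rule inj_onI)
    fix X Y assume "X \<in> Pow A" "Y \<in> Pow A" "insert a X = insert a Y"
    moreover have "X = insert a X - {a}" "Y = insert a Y - {a}" using insert(2) \<open>X \<in> Pow A\<close> \<open>Y \<in> Pow A\<close> by auto
    ultimately show "X = Y" by simp
  qed
  have "(\<Sum>F\<in>Pow (insert a A). (-1::int) ^ card F)
      = (\<Sum>F\<in>Pow A. (-1::int) ^ card F) + (\<Sum>F\<in>insert a ` Pow A. (-1::int) ^ card F)"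
    unfolding Pow_insert
  proof (rule sum.union_disjoint)
    show "finite (Pow A)" "finite (insert a ` Pow A)" using insert(1) by auto
    show "Pow A \<inter> insert a ` Pow A = {}" using insert(2) by blast
  qed
  also have "(\<Sum>F\<in>insert a ` Pow A. (-1::int) ^ card F) = (\<Sum>F\<in>Pow A. (-1::int) ^ card (insert a F))"
    using sum.reindex[OF inj, of "\<lambda>F. (-1::int) ^ card F"] by simp
  also have "\<dots> = (\<Sum>F\<in>Pow A. - ((-1::int) ^ card F))"
  proof (rule sum.cong[OF refl])
    fix x assume "x \<in> Pow A"
    then have "finite x" "a \<notin> x" using insert finite_subset by auto
    then show "(-1::int) ^ card (insert a x) = - ((-1) ^ card x)" by simp
  qed
  finally show ?case using insert by (simp add: sum_negf)
qed

definition mapF :: "('a \<Rightarrow> 'b) \<Rightarrow> 'a set set set \<Rightarrow> 'b set set set" where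
  "mapF g F = (`) ((`) g) ` F"

lemma tpaths_map:
  assumes "inj_on g V" "P \<in> tpaths t V" shows "(`) g ` P \<in> tpaths t (g ` V)"
proof -
  obtain xs where xs: "P = path_edges xs" "distinct xs" "length xs = Suc t" "set xs \<subseteq> V"
    using assms(2) unfolding tpaths_def by blast
  have "distinct (map g xs)" using xs assms(1) by (simp add: distinct_map inj_on_subset)
  then show ?thesis unfolding tpaths_def using xs path_edges_map[of g xs]
    by (intro CollectI exI[of _ "map g xs"]) auto
qed

lemma pverts_img: "pverts ((`) g ` P) = g ` pverts P"
  unfolding pverts_def by auto

lemma pf_tpaths: "F \<in> path_families t V \<Longrightarrow> P \<in> F \<Longrightarrow> P \<in> tpaths t V"
  unfolding path_families_def by blast

lemma pf_disj: "F \<in> path_families t V \<Longrightarrow> P \<in> F \<Longrightarrow> Q \<in> F \<Longrightarrow> P \<noteq> Q \<Longrightarrow> pverts P \<inter> pverts Q = {}"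
  unfolding path_families_def by blast

lemma pf_pverts: assumes "t \<ge> 1" "F \<in> path_families t V" "P \<in> F" shows "pverts P \<subseteq> V"
  using tpaths_pverts_sub[OF assms(1) pf_tpaths[OF assms(2,3)]] .

lemma edge_sub: assumes "t \<ge> 1" "F \<in> path_families t V" "P \<in> F" "e \<in> P" shows "e \<subseteq> V"
proof -
  have "e \<subseteq> pverts P" using assms(4) unfolding pverts_def by blast
  then show ?thesis using pf_pverts[OF assms(1-3)] by (rule subset_trans)
qed

lemma pfI:
  assumes "F \<subseteq> tpaths t V" "\<And>P Q. P \<in> F \<Longrightarrow> Q \<in> F \<Longrightarrow> P \<noteq> Q \<Longrightarrow> pverts P \<inter> pverts Q = {}"
  shows "F \<in> path_families t V"
  using assms unfolding path_families_def by blast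

lemma families_map:
  assumes "t \<ge> 1" "inj_on g V" "F \<in> path_families t V"
  shows "mapF g F \<in> path_families t (g ` V)"
proof (rule pfI)
  show "mapF g F \<subseteq> tpaths t (g ` V)"
  proof
    fix P' assume "P' \<in> mapF g F"
    then obtain P where "P \<in> F" "P' = (`) g ` P" unfolding mapF_def by blast
    then show "P' \<in> tpaths t (g ` V)" using tpaths_map[OF assms(2) pf_tpaths[OF assms(3)]] by simp
  qed
next
  fix P' Q' assume "P' \<in> mapF g F" "Q' \<in> mapF g F" "P' \<noteq> Q'"
  then obtain P Q where PQ: "P \<in> F" "Q \<in> F" "P' = (`) g ` P" "Q' = (`) g ` Q" "P \<noteq> Q"
    unfolding mapF_def by blast
  have d: "pverts P \<inter> pverts Q = {}" by (rule pf_disj[OF assms(3) PQ(1,2,5)])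
  have "pverts P \<subseteq> V" "pverts Q \<subseteq> V" using pf_pverts[OF assms(1,3)] PQ by auto
  then have "g ` pverts P \<inter> g ` pverts Q = g ` (pverts P \<inter> pverts Q)"
    using assms(2) by (simp add: inj_on_image_Int)
  then show "pverts P' \<inter> pverts Q' = {}" using PQ d by (simp add: pverts_img)
qed

lemma mapF_cancel:
  assumes "\<And>P e. P \<in> F \<Longrightarrow> e \<in> P \<Longrightarrow> h ` g ` e = e"
  shows "mapF h (mapF g F) = F"
proof -
  have "\<And>P. P \<in> F \<Longrightarrow> (`) h ` (`) g ` P = P"
    using assms by (simp add: image_image)
  then show ?thesis unfolding mapF_def by (simp add: image_image)
qed

lemma card_mapF:
  assumes "\<And>P e. P \<in> F \<Longrightarrow> e \<in> P \<Longrightarrow> h ` g ` e = e"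
  shows "card (mapF g F) = card F"
proof -
  have "inj_on ((`) ((`) g)) F"
    by (rule inj_on_inverseI[where g = "(`) ((`) h)"]) (use assms in \<open>simp add: image_image\<close>)
  then show ?thesis unfolding mapF_def by (rule card_image)
qed

lemma VF_mapF: "VF (mapF g F) = g ` VF F"
  unfolding VF_def mapF_def by (simp add: pverts_img image_UN)

lemma map_facts:
  assumes "t \<ge> 1" "inj_on g V"
  defines "h \<equiv> inv_into V g"
  shows "\<And>F. F \<in> path_families t V \<Longrightarrow> mapF h (mapF g F) = F"
    and "\<And>F. F \<in> path_families t (g ` V) \<Longrightarrow> mapF g (mapF h F) = F"
    and "\<And>F. F \<in> path_families t V \<Longrightarrow> mapF g F \<in> path_families t (g ` V)"
    and "\<And>F. F \<in> path_families t (g ` V) \<Longrightarrow> mapF h F \<in> path_families t V"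
    and "\<And>F. F \<in> path_families t V \<Longrightarrow> card (mapF g F) = card F"
    and "h ` g ` V = V"
proof -
  show hV: "h ` g ` V = V" unfolding h_def using assms(2) by (simp add: inv_into_image_cancel)
  have ih: "inj_on h (g ` V)" unfolding h_def by (simp add: inj_on_inv_into)
  have c: "h ` g ` e = e" if "F \<in> path_families t V" "P \<in> F" "e \<in> P" for F P e
    using edge_sub[OF assms(1) that] assms(2) by (simp add: h_def inv_into_image_cancel)
  show "mapF h (mapF g F) = F" if "F \<in> path_families t V" for F
    by (rule mapF_cancel) (rule c[OF that])
  show "mapF g (mapF h F) = F" if "F \<in> path_families t (g ` V)" for F
  proof (rule mapF_cancel)
    fix P e assume "P \<in> F" "e \<in> P"
    then have "e \<subseteq> g ` V" by (rule edge_sub[OF assms(1) that])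
    then show "g ` h ` e = e" unfolding h_def by (simp add: image_inv_into_cancel)
  qed
  show "mapF g F \<in> path_families t (g ` V)" if "F \<in> path_families t V" for F
    by (rule families_map[OF assms(1,2) that])
  show "mapF h F \<in> path_families t V" if "F \<in> path_families t (g ` V)" for F
    using families_map[OF assms(1) ih that] hV by simp
  show "card (mapF g F) = card F" if "F \<in> path_families t V" for F
    by (rule card_mapF[where h = h]) (rule c[OF that])
qed

lemma bij_families:
  assumes "t \<ge> 1" "inj_on g V"
  shows "bij_betw (mapF g) (path_families t V) (path_families t (g ` V))"
proof (rule bij_betw_byWitness[where f' = "mapF (inv_into V g)"])
  note m = map_facts[OF assms]
  show "\<forall>a\<in>path_families t V. mapF (inv_into V g) (mapF g a) = a" using m(1) by simp
  show "\<forall>a'\<in>path_families t (g ` V). mapF g (mapF (inv_into V g) a') = a'" using m(2) by simp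
  show "mapF g ` path_families t V \<subseteq> path_families t (g ` V)" using m(3) by auto
  show "mapF (inv_into V g) ` path_families t (g ` V) \<subseteq> path_families t V" using m(4) by auto
qed

lemma pc_iff: "F \<in> path_coverings t V \<longleftrightarrow> F \<in> path_families t V \<and> VF F = V"
  unfolding path_coverings_def VF_def by simp

lemma bij_coverings:
  assumes "t \<ge> 1" "inj_on g V"
  shows "bij_betw (mapF g) (path_coverings t V) (path_coverings t (g ` V))"
proof (rule bij_betw_byWitness[where f' = "mapF (inv_into V g)"])
  note m = map_facts[OF assms]
  show "\<forall>a\<in>path_coverings t V. mapF (inv_into V g) (mapF g a) = a" using m(1) by (simp add: pc_iff)
  show "\<forall>a'\<in>path_coverings t (g ` V). mapF g (mapF (inv_into V g) a') = a'" using m(2) by (simp add: pc_iff)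
  show "mapF g ` path_coverings t V \<subseteq> path_coverings t (g ` V)"
    using m(3) VF_mapF[of g] by (auto simp: pc_iff)
  show "mapF (inv_into V g) ` path_coverings t (g ` V) \<subseteq> path_coverings t V"
    using m(4) m(6) VF_mapF[of "inv_into V g"] by (auto simp: pc_iff)
qed

lemma mu_card:
  assumes "t \<ge> 1" "finite V"
  shows "card (path_coverings t V) = mu t (card V)"
proof -
  obtain g where g: "bij_betw g V {0..<card V}" using ex_bij_betw_finite_nat[OF assms(2)] by blast
  then have "g ` V = {..<card V}" "inj_on g V" by (auto simp: bij_betw_def atLeast0LessThan)
  then show ?thesis unfolding mu_def using bij_coverings[OF assms(1), of g V] bij_betw_same_card
    by metis
qed

lemma Hpoly_block:
  assumes "t \<ge> 1"
  shows "Hpoly t n = (\<Sum>G\<in>path_families t ({k} \<times> {..<n}). monom ((-1) ^ card G) (n - Suc t * card G))"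
proof -
  have i: "inj_on (Pair k) {..<n}" by (auto intro: inj_onI)
  have e: "Pair k ` {..<n} = {k} \<times> {..<n}" by auto
  have b: "bij_betw (mapF (Pair k)) (path_families t {..<n}) (path_families t ({k} \<times> {..<n}))"
    using bij_families[OF assms i] e by simp
  have "(\<Sum>G\<in>path_families t ({k} \<times> {..<n}). monom ((-1) ^ card G) (n - Suc t * card G))
      = (\<Sum>F\<in>path_families t {..<n}. monom ((-1) ^ card (mapF (Pair k) F)) (n - Suc t * card (mapF (Pair k) F)))"
    by (rule sum.reindex_bij_betw[OF b, symmetric])
  also have "\<dots> = Hpoly t n" unfolding Hpoly_def
    by (rule sum.cong[OF refl]) (simp add: map_facts(5)[OF assms i])
  finally show ?thesis by simp
qed

lemma LH_bound:
  assumes "degree p \<le> N"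
  shows "LH t p = (\<Sum>i\<le>N. coeff p i * int (mu t i))"
  unfolding LH_def
proof (rule sum.mono_neutral_left)
  show "finite {..N}" by simp
  show "{..degree p} \<subseteq> {..N}" using assms by auto
  show "\<forall>i\<in>{..N} - {..degree p}. coeff p i * int (mu t i) = 0"
    by (auto simp: coeff_eq_0)
qed

lemma LH_add: "LH t (p + q) = LH t p + LH t q"
proof -
  let ?N = "max (degree p) (degree q)"
  have "LH t (p + q) = (\<Sum>i\<le>?N. coeff (p + q) i * int (mu t i))"
    by (rule LH_bound) (rule degree_add_le_max)
  also have "\<dots> = (\<Sum>i\<le>?N. coeff p i * int (mu t i)) + (\<Sum>i\<le>?N. coeff q i * int (mu t i))"
    by (simp add: distrib_right sum.distrib)
  also have "\<dots> = LH t p + LH t q"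
    by (simp add: LH_bound[symmetric])
  finally show ?thesis .
qed

lemma LH_zero: "LH t 0 = 0"
  unfolding LH_def by simp

lemma LH_sum: "LH t (\<Sum>s\<in>S. f s) = (\<Sum>s\<in>S. LH t (f s))"
proof (cases "finite S")
  case True then show ?thesis
    by (induction S rule: finite_induct) (simp_all add: LH_zero LH_add)
next
  case False then show ?thesis by (simp add: LH_zero)
qed

lemma LH_monom: "LH t (monom c n) = c * int (mu t n)"
proof -
  have "LH t (monom c n) = (\<Sum>i\<le>n. coeff (monom c n) i * int (mu t i))"
    by (rule LH_bound) (rule degree_monom_le)
  also have "\<dots> = (\<Sum>i\<le>n. if i = n then c * int (mu t i) else 0)"
    by (rule sum.cong) auto
  also have "\<dots> = c * int (mu t n)" by simp
  finally show ?thesis .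
qed

definition Dk :: "(nat \<Rightarrow> nat) \<Rightarrow> nat \<Rightarrow> (nat \<times> nat) set" where
  "Dk f k = {(i, j). i < k \<and> j < f i}"

definition hom :: "(nat \<times> nat) set set \<Rightarrow> bool" where
  "hom P \<longleftrightarrow> (\<exists>i. pverts P \<subseteq> {i} \<times> UNIV)"

definition HF :: "nat \<Rightarrow> (nat \<Rightarrow> nat) \<Rightarrow> nat \<Rightarrow> (nat \<times> nat) set set set set" where
  "HF t f k = {F \<in> path_families t (Dk f k). \<forall>P\<in>F. hom P}"

lemma Dk_0: "Dk f 0 = {}" unfolding Dk_def by simp

lemma Dk_Suc: "Dk f (Suc k) = Dk f k \<union> {k} \<times> {..<f k}"
  unfolding Dk_def by (auto simp: less_Suc_eq)

lemma Dk_disj: "Dk f k \<inter> {k} \<times> {..<f k} = {}"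
  unfolding Dk_def by auto

lemma finite_Dk: "finite (Dk f k)"
  by (induction k) (simp_all add: Dk_0 Dk_Suc)

lemma card_Dk_Suc: "card (Dk f (Suc k)) = card (Dk f k) + f k"
proof -
  have "card (Dk f (Suc k)) = card (Dk f k) + card ({k} \<times> {..<f k})"
    unfolding Dk_Suc by (rule card_Un_disjoint) (use finite_Dk Dk_disj in auto)
  then show ?thesis by (simp add: card_cartesian_product)
qed

lemma hom_split:
  assumes "S \<subseteq> {i} \<times> UNIV" "S \<subseteq> Dk f (Suc k)"
  shows "S \<subseteq> Dk f k \<or> S \<subseteq> {k} \<times> {..<f k}"
proof (cases "i = k")
  case True then show ?thesis using assms unfolding Dk_def by auto
next
  case False
  have "S \<subseteq> Dk f k"
  proof
    fix x assume "x \<in> S"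
    then obtain a b where "x = (a, b)" "a = i" "a < Suc k" "b < f a" using assms unfolding Dk_def by blast
    then show "x \<in> Dk f k" using False unfolding Dk_def by auto
  qed
  then show ?thesis by blast
qed

lemma pf_empty: "path_families t {} = {{}}"
proof -
  have "tpaths t {} = {}" unfolding tpaths_def by auto
  then show ?thesis unfolding path_families_def by auto
qed

lemma pf_sub:
  assumes "t \<ge> 1" "F \<in> path_families t V" "\<And>P. P \<in> F' \<Longrightarrow> pverts P \<subseteq> W" "F' \<subseteq> F"
  shows "F' \<in> path_families t W"
proof (rule pfI)
  show "F' \<subseteq> tpaths t W"
  proof
    fix P assume "P \<in> F'"
    then have "P \<in> F" using assms(4) by blast
    then have "P \<in> tpaths t V" by (rule pf_tpaths[OF assms(2)])
    then show "P \<in> tpaths t W" using tpaths_iff[OF assms(1) \<open>P \<in> tpaths t V\<close>] assms(3)[OF \<open>P \<in> F'\<close>] by simp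
  qed
  show "pverts P \<inter> pverts Q = {}" if "P \<in> F'" "Q \<in> F'" "P \<noteq> Q" for P Q
  proof -
    have "P \<in> F" "Q \<in> F" using that assms(4) by blast+
    then show ?thesis by (rule pf_disj[OF assms(2) _ _ that(3)])
  qed
qed

lemma prod_step:
  fixes f :: "nat \<Rightarrow> nat" and k t :: nat
  assumes "t \<ge> 1"
  defines "A \<equiv> Dk f k" and "B \<equiv> {k} \<times> {..<f k}"
  shows "bij_betw (\<lambda>(F, G). F \<union> G) (HF t f k \<times> path_families t B) (HF t f (Suc k))"
    and "\<And>F G. F \<in> HF t f k \<Longrightarrow> G \<in> path_families t B \<Longrightarrow> F \<inter> G = {}"
proof -
  have AB: "A \<inter> B = {}" unfolding A_def B_def by (rule Dk_disj)
  have U: "Dk f (Suc k) = A \<union> B" unfolding A_def B_def by (rule Dk_Suc)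
  have HFpf: "F \<in> path_families t A" if "F \<in> HF t f k" for F
    using that unfolding HF_def A_def by blast
  have selA: "{P \<in> F \<union> G. pverts P \<subseteq> A} = F" and selB: "{P \<in> F \<union> G. pverts P \<subseteq> B} = G"
    if "F \<in> path_families t A" "G \<in> path_families t B" for F G
  proof -
    have a: "pverts P \<subseteq> A" "pverts P \<noteq> {}" if "P \<in> F" for P
      using pf_pverts[OF assms(1) \<open>F \<in> path_families t A\<close> that]
        tpaths_pverts_ne[OF assms(1) pf_tpaths[OF \<open>F \<in> path_families t A\<close> that]] by auto
    have b: "pverts P \<subseteq> B" "pverts P \<noteq> {}" if "P \<in> G" for P
      using pf_pverts[OF assms(1) \<open>G \<in> path_families t B\<close> that]
        tpaths_pverts_ne[OF assms(1) pf_tpaths[OF \<open>G \<in> path_families t B\<close> that]] by auto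
    have na: "\<not> pverts P \<subseteq> A" if "P \<in> G" for P using b[OF that] AB by blast
    have nb: "\<not> pverts P \<subseteq> B" if "P \<in> F" for P using a[OF that] AB by blast
    show "{P \<in> F \<union> G. pverts P \<subseteq> A} = F" using a na by blast
    show "{P \<in> F \<union> G. pverts P \<subseteq> B} = G" using b nb by blast
  qed
  show disj: "F \<inter> G = {}" if "F \<in> HF t f k" "G \<in> path_families t B" for F G
  proof (rule equals0I)
    fix P assume P: "P \<in> F \<inter> G"
    have "pverts P \<subseteq> A" using pf_pverts[OF assms(1) HFpf[OF that(1)]] P by blast
    moreover have "pverts P \<subseteq> B" using pf_pverts[OF assms(1) that(2)] P by blast
    moreover have "pverts P \<noteq> {}" using tpaths_pverts_ne[OF assms(1) pf_tpaths[OF that(2)]] P by blast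
    ultimately show False using AB by blast
  qed
  show "bij_betw (\<lambda>(F, G). F \<union> G) (HF t f k \<times> path_families t B) (HF t f (Suc k))"
  proof (rule bij_betw_byWitness[where f' = "\<lambda>F'. ({P \<in> F'. pverts P \<subseteq> A}, {P \<in> F'. pverts P \<subseteq> B})"])
    show "\<forall>a\<in>HF t f k \<times> path_families t B.
        ({P \<in> (case a of (F, G) \<Rightarrow> F \<union> G). pverts P \<subseteq> A}, {P \<in> (case a of (F, G) \<Rightarrow> F \<union> G). pverts P \<subseteq> B}) = a"
    proof
      fix a assume a: "a \<in> HF t f k \<times> path_families t B"
      then obtain F G where FG: "a = (F, G)" "F \<in> HF t f k" "G \<in> path_families t B" by blast
      have "F \<in> path_families t A" by (rule HFpf[OF FG(2)])
      then show "({P \<in> (case a of (F, G) \<Rightarrow> F \<union> G). pverts P \<subseteq> A}, {P \<in> (case a of (F, G) \<Rightarrow> F \<union> G). pverts P \<subseteq> B}) = a"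
        using selA[OF _ FG(3)] selB[OF _ FG(3)] FG(1) by simp
    qed
    show "\<forall>a'\<in>HF t f (Suc k). (case ({P \<in> a'. pverts P \<subseteq> A}, {P \<in> a'. pverts P \<subseteq> B}) of (F, G) \<Rightarrow> F \<union> G) = a'"
    proof
      fix F' assume F': "F' \<in> HF t f (Suc k)"
      have pf': "F' \<in> path_families t (Dk f (Suc k))" using F' unfolding HF_def by blast
      have AorB: "pverts P \<subseteq> A \<or> pverts P \<subseteq> B" if "P \<in> F'" for P
      proof -
        have "hom P" using F' that unfolding HF_def by blast
        then obtain i where i: "pverts P \<subseteq> {i} \<times> UNIV" unfolding hom_def by blast
        have "pverts P \<subseteq> Dk f (Suc k)" by (rule pf_pverts[OF assms(1) pf' that])
        from hom_split[OF i this] show ?thesis unfolding A_def B_def .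
      qed
      have "{P \<in> F'. pverts P \<subseteq> A} \<union> {P \<in> F'. pverts P \<subseteq> B} = F'"
      proof (rule set_eqI, rule iffI)
        fix P assume "P \<in> {P \<in> F'. pverts P \<subseteq> A} \<union> {P \<in> F'. pverts P \<subseteq> B}"
        then show "P \<in> F'" by blast
      next
        fix P assume "P \<in> F'"
        with AorB[OF this] show "P \<in> {P \<in> F'. pverts P \<subseteq> A} \<union> {P \<in> F'. pverts P \<subseteq> B}" by blast
      qed
      then show "(case ({P \<in> F'. pverts P \<subseteq> A}, {P \<in> F'. pverts P \<subseteq> B}) of (F, G) \<Rightarrow> F \<union> G) = F'"
        by simp
    qed
    show "(\<lambda>(F, G). F \<union> G) ` (HF t f k \<times> path_families t B) \<subseteq> HF t f (Suc k)"
    proof clarify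
      fix F G assume FG: "F \<in> HF t f k" "G \<in> path_families t B"
      have FA: "F \<in> path_families t A" using HFpf FG(1) .
      have "F \<union> G \<in> path_families t (Dk f (Suc k))"
      proof (rule pfI)
        show "F \<union> G \<subseteq> tpaths t (Dk f (Suc k))"
          using tpaths_mono[of A "Dk f (Suc k)" t] tpaths_mono[of B "Dk f (Suc k)" t] U
            pf_tpaths[OF FA] pf_tpaths[OF FG(2)] by blast
        fix P Q assume PQ: "P \<in> F \<union> G" "Q \<in> F \<union> G" "P \<noteq> Q"
        have vA: "pverts P \<subseteq> A" if "P \<in> F" for P using pf_pverts[OF assms(1) FA that] .
        have vB: "pverts P \<subseteq> B" if "P \<in> G" for P using pf_pverts[OF assms(1) FG(2) that] .
        show "pverts P \<inter> pverts Q = {}"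
        proof (cases "P \<in> F")
          case True
          show ?thesis
          proof (cases "Q \<in> F")
            case True then show ?thesis using pf_disj[OF FA] \<open>P \<in> F\<close> PQ(3) by blast
          next
            case False then have "Q \<in> G" using PQ by blast
            then show ?thesis using vA[OF \<open>P \<in> F\<close>] vB AB by blast
          qed
        next
          case False then have PG: "P \<in> G" using PQ by blast
          show ?thesis
          proof (cases "Q \<in> F")
            case True then show ?thesis using vA vB[OF PG] AB by blast
          next
            case False then have "Q \<in> G" using PQ by blast
            then show ?thesis using pf_disj[OF FG(2)] PG PQ(3) by blast
          qed
        qed
      qed
      moreover have "hom P" if "P \<in> F \<union> G" for P
      proof (cases "P \<in> F")
        case True then show ?thesis using FG(1) unfolding HF_def by blast
      next
        case False then have "P \<in> G" using that by blast
        then have "pverts P \<subseteq> {k} \<times> UNIV" using pf_pverts[OF assms(1) FG(2)] unfolding B_def by blast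
        then show ?thesis unfolding hom_def by blast
      qed
      ultimately show "F \<union> G \<in> HF t f (Suc k)" unfolding HF_def by blast
    qed
    show "(\<lambda>F'. ({P \<in> F'. pverts P \<subseteq> A}, {P \<in> F'. pverts P \<subseteq> B})) ` HF t f (Suc k) \<subseteq> HF t f k \<times> path_families t B"
    proof (rule subsetI)
      fix x assume "x \<in> (\<lambda>F'. ({P \<in> F'. pverts P \<subseteq> A}, {P \<in> F'. pverts P \<subseteq> B})) ` HF t f (Suc k)"
      then obtain F' where F': "F' \<in> HF t f (Suc k)" and x: "x = ({P \<in> F'. pverts P \<subseteq> A}, {P \<in> F'. pverts P \<subseteq> B})"
        by blast
      have pf: "F' \<in> path_families t (Dk f (Suc k))" using F' unfolding HF_def by blast
      have "{P \<in> F'. pverts P \<subseteq> A} \<in> path_families t A"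
        by (rule pf_sub[OF assms(1) pf]) auto
      moreover have "\<forall>P\<in>{P \<in> F'. pverts P \<subseteq> A}. hom P" using F' unfolding HF_def by blast
      ultimately have 1: "{P \<in> F'. pverts P \<subseteq> A} \<in> HF t f k" unfolding HF_def A_def by blast
      have 2: "{P \<in> F'. pverts P \<subseteq> B} \<in> path_families t B"
        by (rule pf_sub[OF assms(1) pf]) auto
      show "x \<in> HF t f k \<times> path_families t B" using 1 2 x by simp
    qed
  qed
qed

lemma HF_pf: "F \<in> HF t f k \<Longrightarrow> F \<in> path_families t (Dk f k)"
  unfolding HF_def by blast

lemma finite_HF: "finite (HF t f k)"
proof -
  have "HF t f k \<subseteq> path_families t (Dk f k)" unfolding HF_def by blast
  then show ?thesis using finite_path_families[OF finite_Dk] by (rule finite_subset)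
qed

lemma summand:
  assumes "t \<ge> 1" "F \<in> HF t f k" "G \<in> path_families t ({k} \<times> {..<f k})"
  shows "monom ((-1::int) ^ card F) (card (Dk f k) - Suc t * card F) * monom ((-1) ^ card G) (f k - Suc t * card G)
       = monom ((-1) ^ card (F \<union> G)) (card (Dk f (Suc k)) - Suc t * card (F \<union> G))"
proof -
  have fB: "finite ({k} \<times> {..<f k})" by simp
  have cB: "card ({k} \<times> {..<f k}) = f k" by (simp add: card_cartesian_product)
  have pfF: "F \<in> path_families t (Dk f k)" by (rule HF_pf[OF assms(2)])
  have finF: "finite F" by (rule finite_family[OF finite_Dk pfF])
  have finG: "finite G" by (rule finite_family[OF fB assms(3)])
  have FG: "F \<inter> G = {}" by (rule prod_step(2)[OF assms(1) assms(2,3)])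
  have cU: "card (F \<union> G) = card F + card G" by (rule card_Un_disjoint[OF finF finG FG])
  have bF: "Suc t * card F \<le> card (Dk f k)"
    using card_VF[OF assms(1) finite_Dk pfF] card_mono[OF finite_Dk VF_sub[OF assms(1) pfF]] by simp
  have bG: "Suc t * card G \<le> f k"
    using card_VF[OF assms(1) fB assms(3)] card_mono[OF fB VF_sub[OF assms(1) assms(3)]] cB by simp
  have e: "card (Dk f k) - Suc t * card F + (f k - Suc t * card G) = card (Dk f (Suc k)) - Suc t * card (F \<union> G)"
    using bF bG cU card_Dk_Suc[of f k] by (simp add: algebra_simps)
  show ?thesis unfolding mult_monom e by (simp add: cU power_add)
qed

lemma prod_HF:
  assumes "t \<ge> 1"
  shows "(\<Prod>i<k. Hpoly t (f i)) = (\<Sum>F\<in>HF t f k. monom ((-1) ^ card F) (card (Dk f k) - Suc t * card F))"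
proof (induction k)
  case 0
  have "HF t f 0 = {{}}" unfolding HF_def Dk_0 pf_empty by auto
  then show ?case by (simp add: Dk_0)
next
  case (Suc k)
  define c where "c H = monom ((-1::int) ^ card H) (card (Dk f (Suc k)) - Suc t * card H)" for H :: "(nat \<times> nat) set set set"
  have "(\<Prod>i<Suc k. Hpoly t (f i))
      = (\<Sum>F\<in>HF t f k. monom ((-1) ^ card F) (card (Dk f k) - Suc t * card F))
        * (\<Sum>G\<in>path_families t ({k} \<times> {..<f k}). monom ((-1) ^ card G) (f k - Suc t * card G))"
    using Suc.IH Hpoly_block[OF assms, of "f k" k] by simp
  also have "\<dots> = (\<Sum>(F, G)\<in>HF t f k \<times> path_families t ({k} \<times> {..<f k}).
        monom ((-1) ^ card F) (card (Dk f k) - Suc t * card F) * monom ((-1) ^ card G) (f k - Suc t * card G))"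
    by (simp add: sum_product sum.cartesian_product)
  also have "\<dots> = (\<Sum>x\<in>HF t f k \<times> path_families t ({k} \<times> {..<f k}). c ((\<lambda>(F, G). F \<union> G) x))"
  proof (rule sum.cong[OF refl])
    fix x assume "x \<in> HF t f k \<times> path_families t ({k} \<times> {..<f k})"
    then obtain F G where "x = (F, G)" "F \<in> HF t f k" "G \<in> path_families t ({k} \<times> {..<f k})" by blast
    then show "(case x of (F, G) \<Rightarrow> monom ((-1) ^ card F) (card (Dk f k) - Suc t * card F) * monom ((-1) ^ card G) (f k - Suc t * card G))
        = c ((\<lambda>(F, G). F \<union> G) x)"
      using summand[OF assms] unfolding c_def by simp
  qed
  also have "\<dots> = (\<Sum>H\<in>HF t f (Suc k). c H)"
    by (rule sum.reindex_bij_betw[OF prod_step(1)[OF assms]])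
  finally show ?case unfolding c_def .
qed

lemma VF_Un: "VF (F \<union> G) = VF F \<union> VF G"
  unfolding VF_def by blast

lemma VF_mem: "P \<in> F \<Longrightarrow> pverts P \<subseteq> VF F"
  unfolding VF_def by blast

lemma bij_main:
  fixes f :: "nat \<Rightarrow> nat" and k t :: nat
  assumes "t \<ge> 1"
  defines "D \<equiv> Dk f k"
  shows "bij_betw (\<lambda>(F, G). (F \<union> G, F)) (Sigma (HF t f k) (\<lambda>F. path_coverings t (D - VF F)))
           (Sigma (path_coverings t D) (\<lambda>C. Pow {P \<in> C. hom P}))"
proof (rule bij_betw_byWitness[where f' = "\<lambda>(C, F). (F, C - F)"])
  have HFD: "F \<in> path_families t D" if "F \<in> HF t f k" for F
    using HF_pf[OF that] unfolding D_def .
  show "\<forall>a\<in>Sigma (HF t f k) (\<lambda>F. path_coverings t (D - VF F)). (case (case a of (F, G) \<Rightarrow> (F \<union> G, F)) of (C, F) \<Rightarrow> (F, C - F)) = a"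
  proof
    fix a assume "a \<in> Sigma (HF t f k) (\<lambda>F. path_coverings t (D - VF F))"
    then obtain F G where a: "a = (F, G)" "F \<in> HF t f k" "G \<in> path_coverings t (D - VF F)" by blast
    have Gpf: "G \<in> path_families t (D - VF F)" using a(3) unfolding pc_iff by blast
    have "F \<inter> G = {}"
    proof (rule equals0I)
      fix P assume P: "P \<in> F \<inter> G"
      have "pverts P \<subseteq> VF F" using VF_mem P by blast
      moreover have "pverts P \<subseteq> D - VF F" using pf_pverts[OF assms(1) Gpf] P by blast
      moreover have "pverts P \<noteq> {}" using tpaths_pverts_ne[OF assms(1) pf_tpaths[OF Gpf]] P by blast
      ultimately show False by blast
    qed
    then have "F \<union> G - F = G" by blast
    then show "(case (case a of (F, G) \<Rightarrow> (F \<union> G, F)) of (C, F) \<Rightarrow> (F, C - F)) = a" using a(1) by simp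
  qed
  show "\<forall>b\<in>Sigma (path_coverings t D) (\<lambda>C. Pow {P \<in> C. hom P}). (case (case b of (C, F) \<Rightarrow> (F, C - F)) of (F, G) \<Rightarrow> (F \<union> G, F)) = b"
  proof
    fix b assume "b \<in> Sigma (path_coverings t D) (\<lambda>C. Pow {P \<in> C. hom P})"
    then obtain C F where b: "b = (C, F)" "F \<subseteq> C" by blast
    then have "F \<union> (C - F) = C" by blast
    then show "(case (case b of (C, F) \<Rightarrow> (F, C - F)) of (F, G) \<Rightarrow> (F \<union> G, F)) = b" using b(1) by simp
  qed
  show "(\<lambda>(F, G). (F \<union> G, F)) ` Sigma (HF t f k) (\<lambda>F. path_coverings t (D - VF F)) \<subseteq> Sigma (path_coverings t D) (\<lambda>C. Pow {P \<in> C. hom P})"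
  proof (rule subsetI)
    fix x assume "x \<in> (\<lambda>(F, G). (F \<union> G, F)) ` Sigma (HF t f k) (\<lambda>F. path_coverings t (D - VF F))"
    then obtain y where y: "y \<in> Sigma (HF t f k) (\<lambda>F. path_coverings t (D - VF F))" "x = (case y of (F, G) \<Rightarrow> (F \<union> G, F))"
      by (rule imageE)
    then obtain F G where x: "x = (F \<union> G, F)" and F: "F \<in> HF t f k" and G: "G \<in> path_coverings t (D - VF F)"
      by (cases y) auto
    have Gpf: "G \<in> path_families t (D - VF F)" and VG: "VF G = D - VF F" using G unfolding pc_iff by blast+
    have Fpf: "F \<in> path_families t D" by (rule HFD[OF F])
    have VFD: "VF F \<subseteq> D" by (rule VF_sub[OF assms(1) Fpf])
    have vF: "pverts P \<subseteq> VF F" if "P \<in> F" for P using VF_mem[OF that] .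
    have vG: "pverts P \<subseteq> D - VF F" if "P \<in> G" for P by (rule pf_pverts[OF assms(1) Gpf that])
    have "F \<union> G \<in> path_families t D"
    proof (rule pfI)
      have "tpaths t (D - VF F) \<subseteq> tpaths t D" by (rule tpaths_mono) blast
      then show "F \<union> G \<subseteq> tpaths t D" using pf_tpaths[OF Fpf] pf_tpaths[OF Gpf] by blast
      fix P Q assume PQ: "P \<in> F \<union> G" "Q \<in> F \<union> G" "P \<noteq> Q"
      show "pverts P \<inter> pverts Q = {}"
      proof (cases "P \<in> F")
        case True
        show ?thesis
        proof (cases "Q \<in> F")
          case True then show ?thesis using pf_disj[OF Fpf \<open>P \<in> F\<close> _ PQ(3)] by blast
        next
          case False then have "Q \<in> G" using PQ by blast
          then show ?thesis using vF[OF \<open>P \<in> F\<close>] vG[OF \<open>Q \<in> G\<close>] by blast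
        qed
      next
        case False then have PG: "P \<in> G" using PQ by blast
        show ?thesis
        proof (cases "Q \<in> F")
          case True then show ?thesis using vF[OF \<open>Q \<in> F\<close>] vG[OF PG] by blast
        next
          case False then have "Q \<in> G" using PQ by blast
          then show ?thesis using pf_disj[OF Gpf PG _ PQ(3)] by blast
        qed
      qed
    qed
    moreover have "VF (F \<union> G) = D" unfolding VF_Un VG using VFD by blast
    ultimately have "F \<union> G \<in> path_coverings t D" unfolding pc_iff by blast
    moreover have "F \<subseteq> {P \<in> F \<union> G. hom P}" using F unfolding HF_def by blast
    ultimately show "x \<in> Sigma (path_coverings t D) (\<lambda>C. Pow {P \<in> C. hom P})" using x by blast
  qed
  show "(\<lambda>(C, F). (F, C - F)) ` Sigma (path_coverings t D) (\<lambda>C. Pow {P \<in> C. hom P}) \<subseteq> Sigma (HF t f k) (\<lambda>F. path_coverings t (D - VF F))"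
  proof (rule subsetI)
    fix x assume "x \<in> (\<lambda>(C, F). (F, C - F)) ` Sigma (path_coverings t D) (\<lambda>C. Pow {P \<in> C. hom P})"
    then obtain y where y: "y \<in> Sigma (path_coverings t D) (\<lambda>C. Pow {P \<in> C. hom P})" "x = (case y of (C, F) \<Rightarrow> (F, C - F))"
      by (rule imageE)
    then obtain C F where x: "x = (F, C - F)" and C: "C \<in> path_coverings t D" and F: "F \<subseteq> C" "\<forall>P\<in>F. hom P"
      by (cases y) auto
    have Cpf: "C \<in> path_families t D" and VC: "VF C = D" using C unfolding pc_iff by blast+
    have vC: "pverts P \<subseteq> D" if "P \<in> C" for P by (rule pf_pverts[OF assms(1) Cpf that])
    have "F \<in> path_families t D"
      by (rule pf_sub[OF assms(1) Cpf _ F(1)]) (use vC F(1) in blast)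
    then have FHF: "F \<in> HF t f k" using F(2) unfolding HF_def D_def by blast
    have sub: "pverts Q \<subseteq> D - VF F" if "Q \<in> C - F" for Q
    proof
      fix v assume v: "v \<in> pverts Q"
      have "v \<in> D" using vC v that by blast
      moreover have "v \<notin> VF F"
      proof
        assume "v \<in> VF F"
        then obtain P where P: "P \<in> F" "v \<in> pverts P" unfolding VF_def by blast
        have "P \<noteq> Q" using P(1) that by blast
        then have "pverts P \<inter> pverts Q = {}" using pf_disj[OF Cpf _ _ \<open>P \<noteq> Q\<close>] P(1) F(1) that by blast
        then show False using P(2) v by blast
      qed
      ultimately show "v \<in> D - VF F" by blast
    qed
    have "C - F \<in> path_families t (D - VF F)"
      by (rule pf_sub[OF assms(1) Cpf]) (use sub in auto)
    moreover have "VF (C - F) = D - VF F"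
    proof
      show "VF (C - F) \<subseteq> D - VF F" using sub unfolding VF_def by blast
      show "D - VF F \<subseteq> VF (C - F)"
      proof
        fix v assume v: "v \<in> D - VF F"
        then obtain Q where Q: "Q \<in> C" "v \<in> pverts Q" using VC unfolding VF_def by blast
        have "Q \<notin> F" using VF_mem[of Q F] Q(2) v by blast
        then show "v \<in> VF (C - F)" using Q unfolding VF_def by blast
      qed
    qed
    ultimately have "C - F \<in> path_coverings t (D - VF F)" unfolding pc_iff by blast
    then show "x \<in> Sigma (HF t f k) (\<lambda>F. path_coverings t (D - VF F))" using x FHF by blast
  qed
qed

lemma finite_pc: "finite V \<Longrightarrow> finite (path_coverings t V)"
proof -
  assume "finite V"
  have "path_coverings t V \<subseteq> path_families t V" unfolding path_coverings_def by blast
  then show ?thesis using finite_path_families[OF \<open>finite V\<close>] by (rule finite_subset)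
qed

lemma main_gen:
  assumes "t \<ge> 1"
  shows "LH t (\<Sum>F\<in>HF t f k. monom ((-1) ^ card F) (card (Dk f k) - Suc t * card F))
       = int (card {C \<in> path_coverings t (Dk f k). \<forall>P\<in>C. \<not> hom P})"
proof -
  define D where "D = Dk f k"
  have finD: "finite D" unfolding D_def by (rule finite_Dk)
  have "LH t (\<Sum>F\<in>HF t f k. monom ((-1) ^ card F) (card (Dk f k) - Suc t * card F))
      = (\<Sum>F\<in>HF t f k. (-1) ^ card F * int (mu t (card D - Suc t * card F)))"
    by (simp add: LH_sum LH_monom D_def)
  also have "\<dots> = (\<Sum>F\<in>HF t f k. \<Sum>G\<in>path_coverings t (D - VF F). (-1::int) ^ card F)"
  proof (rule sum.cong[OF refl])
    fix F assume F: "F \<in> HF t f k"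
    have pf: "F \<in> path_families t D" using HF_pf[OF F] unfolding D_def .
    have sub: "VF F \<subseteq> D" by (rule VF_sub[OF assms pf])
    have "card (D - VF F) = card D - card (VF F)"
      by (rule card_Diff_subset[OF finite_subset[OF sub finD] sub])
    then have "card (D - VF F) = card D - Suc t * card F" using card_VF[OF assms finD pf] by simp
    then have "mu t (card D - Suc t * card F) = card (path_coverings t (D - VF F))"
      using mu_card[OF assms, of "D - VF F"] finD by simp
    then show "(-1) ^ card F * int (mu t (card D - Suc t * card F))
        = (\<Sum>G\<in>path_coverings t (D - VF F). (-1::int) ^ card F)" by simp
  qed
  also have "\<dots> = (\<Sum>(F, G)\<in>Sigma (HF t f k) (\<lambda>F. path_coverings t (D - VF F)). (-1::int) ^ card F)"
  proof (rule sum.Sigma)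
    show "finite (HF t f k)" by (rule finite_HF)
    show "\<forall>F\<in>HF t f k. finite (path_coverings t (D - VF F))" using finD finite_pc by blast
  qed
  also have "\<dots> = (\<Sum>(C, F)\<in>Sigma (path_coverings t D) (\<lambda>C. Pow {P \<in> C. hom P}). (-1::int) ^ card F)"
  proof -
    have "(\<Sum>x\<in>Sigma (HF t f k) (\<lambda>F. path_coverings t (D - VF F)). (\<lambda>(C, F). (-1::int) ^ card F) ((\<lambda>(F, G). (F \<union> G, F)) x))
        = (\<Sum>(C, F)\<in>Sigma (path_coverings t D) (\<lambda>C. Pow {P \<in> C. hom P}). (-1::int) ^ card F)"
      using sum.reindex_bij_betw[OF bij_main[OF assms, of f k]] unfolding D_def .
    moreover have "(\<Sum>x\<in>Sigma (HF t f k) (\<lambda>F. path_coverings t (D - VF F)). (\<lambda>(C, F). (-1::int) ^ card F) ((\<lambda>(F, G). (F \<union> G, F)) x))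
        = (\<Sum>(F, G)\<in>Sigma (HF t f k) (\<lambda>F. path_coverings t (D - VF F)). (-1::int) ^ card F)"
      by (rule sum.cong[OF refl]) auto
    ultimately show ?thesis by simp
  qed
  also have "\<dots> = (\<Sum>C\<in>path_coverings t D. \<Sum>F\<in>Pow {P \<in> C. hom P}. (-1::int) ^ card F)"
  proof (rule sum.Sigma[symmetric])
    show "finite (path_coverings t D)" by (rule finite_pc[OF finD])
    show "\<forall>C\<in>path_coverings t D. finite (Pow {P \<in> C. hom P})"
    proof
      fix C assume "C \<in> path_coverings t D"
      then have "finite C" using finite_family[OF finD] unfolding path_coverings_def by blast
      then show "finite (Pow {P \<in> C. hom P})" by simp
    qed
  qed
  also have "\<dots> = (\<Sum>C\<in>path_coverings t D. if {P \<in> C. hom P} = {} then 1 else 0)"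
  proof (rule sum.cong[OF refl])
    fix C assume "C \<in> path_coverings t D"
    then have "finite C" using finite_family[OF finD] unfolding path_coverings_def by blast
    then show "(\<Sum>F\<in>Pow {P \<in> C. hom P}. (-1::int) ^ card F) = (if {P \<in> C. hom P} = {} then 1 else 0)"
      by (intro sum_Pow_alt) simp
  qed
  also have "\<dots> = (\<Sum>C\<in>{C \<in> path_coverings t D. \<forall>P\<in>C. \<not> hom P}. 1)"
  proof -
    have "(\<Sum>C\<in>{C \<in> path_coverings t D. \<forall>P\<in>C. \<not> hom P}. (1::int))
        = (\<Sum>C\<in>path_coverings t D. if \<forall>P\<in>C. \<not> hom P then 1 else 0)"
      by (rule sum.inter_filter[OF finite_pc[OF finD]])
    moreover have "\<And>C. ({P \<in> C. hom P} = {}) = (\<forall>P\<in>C. \<not> hom P)" by blast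
    ultimately show ?thesis by simp
  qed
  also have "\<dots> = int (card {C \<in> path_coverings t D. \<forall>P\<in>C. \<not> hom P})" by simp
  finally show ?thesis unfolding D_def .
qed

theorem mainTheorem12:
  fixes t :: nat and ns :: "nat list"
  assumes "t \<ge> 1"
  shows "LH t (\<Prod>i<length ns. Hpoly t (ns ! i)) = int (card (inhom_coverings t ns))"
proof -
  have D: "Dk (\<lambda>i. ns ! i) (length ns) = disj_union ns" unfolding Dk_def disj_union_def by simp
  have I: "inhom_coverings t ns = {C \<in> path_coverings t (Dk (\<lambda>i. ns ! i) (length ns)). \<forall>P\<in>C. \<not> hom P}"
    unfolding inhom_coverings_def D hom_def by simp
  show ?thesis
    unfolding prod_HF[OF assms, of "\<lambda>i. ns ! i" "length ns"] main_gen[OF assms] I ..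
qed

end
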